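(* For every integer $n\ge1$ and every $\eta>0$, $$\sup_{0\ne f\in\mathcal{T}_n(\eta)}\frac{|f'(0)|}{\|f\|_{[0,1]}} \ge 2(n-1)^2.$$
   Context: For $\eta>0$, $\mathcal{T}_n(\eta)$ denotes the set of all functions $f(t)=\sum_{j=1}^na_je^{i\lambda_jt}$ with $a_j\in\mathbb{C}$ and real $0<\lambda_1<\lambda_2<\cdots<\lambda_n<\eta$. $\|f\|_{[0,1]}:=\sup_{t\in[0,1]}|f(t)|$. *)

theory Defs
  imports "HOL-Analysis.Analysis"
begin

definition expsums :: "nat \<Rightarrow> real \<Rightarrow> (real \<Rightarrow> complex) set" where
  "expsums n \<eta> = {f. \<exists>(a::nat \<Rightarrow> complex) (lam::nat \<Rightarrow> real).
      (\<forall>j\<in>{1..n}. 0 < lam j \<and> lam j < \<eta>) \<and>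
      (\<forall>j\<in>{1..<n}. lam j < lam (Suc j)) \<and>
      f = (\<lambda>t. \<Sum>j=1..n. a j * exp (\<i> * complex_of_real (lam j * t)))}"

definition supnorm01 :: "(real \<Rightarrow> complex) \<Rightarrow> real" where
  "supnorm01 f = (SUP t\<in>{0..1}. cmod (f t))"

end

theory Submission imports Defs "HOL-Computational_Algebra.Polynomial" "HOL-Probability.Characteristic_Functions" begin

fun chebp :: "nat \<Rightarrow> complex poly" where
  "chebp 0 = 1"
| "chebp (Suc 0) = [:0,1:]"
| "chebp (Suc (Suc k)) = [:0,2:] * chebp (Suc k) - chebp k"

lemma chebp_degree: "degree (chebp k) \<le> k"
proof (induction k rule: chebp.induct)
  case (3 k)
  have "degree ([:0,2:] * chebp (Suc k)) \<le> Suc (Suc k)"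
    using degree_mult_le[of "[:0,2:]" "chebp (Suc k)"] 3(1) by simp
  then show ?case using 3 degree_diff_le by (simp add: degree_diff_le)
qed auto

lemma chebp_one: "poly (chebp k) 1 = 1"
  by (induction k rule: chebp.induct) auto

lemma chebp_deriv_one: "poly (pderiv (chebp k)) 1 = of_nat (k^2)"
proof (induction k rule: chebp.induct)
  case (3 k)
  then show ?case by (simp add: pderiv_mult pderiv_diff pderiv_smult chebp_one pderiv_pCons algebra_simps power2_eq_square)
qed (auto simp: pderiv_pCons)

lemma chebp_cos: "\<bar>x\<bar> \<le> 1 \<Longrightarrow> poly (chebp k) (complex_of_real x) = complex_of_real (cos (real k * arccos x))"
proof (induction k rule: chebp.induct)
  case (3 k)
  define \<theta> where "\<theta> = arccos x"
  have x: "x = cos \<theta>" using 3(3) by (simp add: \<theta>_def cos_arccos_abs)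
  have "cos (real (Suc (Suc k)) * \<theta>) = 2 * cos \<theta> * cos (real (Suc k) * \<theta>) - cos (real k * \<theta>)"
    using cos_add[of "real (Suc k) * \<theta>" \<theta>] cos_diff[of "real (Suc k) * \<theta>" \<theta>]
    by (simp add: algebra_simps)
  then show ?case using 3 by (simp add: x[symmetric] \<theta>_def)
qed auto

lemma poly_sum_le: fixes p :: "complex poly" assumes "degree p \<le> N" shows "poly p x = (\<Sum>i\<le>N. coeff p i * x ^ i)"
  unfolding poly_altdef
  by (rule sum.mono_neutral_left) (use assms in \<open>auto simp: coeff_eq_0\<close>)

lemma shift_sum: fixes p :: "complex poly" shows "degree p \<le> N \<Longrightarrow> u * poly p u = (\<Sum>j=1..Suc N. coeff p (j-1) * u ^ j)"
proof -
  assume d: "degree p \<le> N"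
  have "u * poly p u = (\<Sum>i=0..N. coeff p i * u ^ Suc i)"
    by (simp add: poly_sum_le[OF d] sum_distrib_left atMost_atLeast0 algebra_simps)
  also have "\<dots> = (\<Sum>j=Suc 0..Suc N. coeff p (j-1) * u ^ j)"
    by (simp only: sum.shift_bounds_cl_Suc_ivl) simp
  finally show ?thesis by simp
qed

lemma approx:
  fixes N :: nat and \<eta> \<delta> :: real
  assumes "\<eta> > 0" "\<delta> > 0"
  shows "\<exists>f\<in>{f\<in>expsums (Suc N) \<eta>. f \<noteq> (\<lambda>_. 0)}.
     cmod (vector_derivative f (at 0)) \<ge> 2 * real N ^ 2 - \<delta> \<and> supnorm01 f \<le> 1 + \<delta> \<and> supnorm01 f > 0"
proof -
  define T where "T = chebp N"
  have "uniformly_continuous_on (cball 0 5) (poly T)"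
    by (intro compact_uniformly_continuous continuous_intros) auto
  then obtain \<rho> where \<rho>: "\<rho> > 0" and \<rho>b: "\<And>z x. z \<in> cball 0 5 \<Longrightarrow> x \<in> cball 0 5 \<Longrightarrow> dist z x < \<rho> \<Longrightarrow> dist (poly T z) (poly T x) < \<delta>"
    using assms(2) unfolding uniformly_continuous_on_def by metis
  define \<epsilon> where "\<epsilon> = min (min \<delta> 1) (min (\<rho>/2) (\<eta>/(2*(N+1))))"
  have \<epsilon>0: "\<epsilon> > 0" using assms \<rho> by (simp add: \<epsilon>_def)
  have \<epsilon>\<delta>: "\<epsilon> \<le> \<delta>" "\<epsilon> \<le> 1" "\<epsilon> < \<rho>" using \<rho> by (auto simp: \<epsilon>_def)
  have \<epsilon>\<eta>: "\<epsilon> * (N+1) < \<eta>"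
  proof -
    have "\<epsilon> * (N+1) \<le> \<eta>/(2*(N+1)) * (N+1)" by (intro mult_right_mono) (auto simp: \<epsilon>_def)
    also have "\<dots> = \<eta>/2" by (simp add: field_simps)
    finally show ?thesis using assms by simp
  qed
  define c where "c = \<i> * complex_of_real \<epsilon>"
  have c0: "c \<noteq> 0" using \<epsilon>0 by (simp add: c_def)
  define Q where "Q = pcompose T [: 1 + 2/c, -2/c :]"
  have degQ: "degree Q \<le> N"
    using chebp_degree[of N] by (simp add: Q_def T_def degree_pcompose)
  have polyQ: "poly Q u = poly T (1 + 2/c - 2/c * u)" for u
    by (simp add: Q_def poly_pcompose algebra_simps)
  define g where "g = (\<lambda>t. \<Sum>j=1..Suc N. coeff Q (j-1) * exp (\<i> * complex_of_real ((\<epsilon> * real j) * t)))"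
  define G where "G = (\<lambda>z. exp (c * z) * poly T (1 + 2/c - 2/c * exp (c * z)))"
  have gG: "g t = G (of_real t)" for t
  proof -
    have "G (of_real t) = exp (c * of_real t) * poly Q (exp (c * of_real t))"
      by (simp add: G_def polyQ)
    also have "\<dots> = (\<Sum>j=1..Suc N. coeff Q (j-1) * exp (c * of_real t) ^ j)"
      by (rule shift_sum[OF degQ])
    also have "\<dots> = g t"
      unfolding g_def
    proof (rule sum.cong[OF refl])
      fix j assume "j \<in> {1..Suc N}"
      have "exp (c * of_real t) ^ j = exp (of_nat j * (c * of_real t))" by (rule exp_of_nat_mult[symmetric])
      also have "\<dots> = exp (\<i> * complex_of_real ((\<epsilon> * real j) * t))" by (simp add: c_def algebra_simps)
      finally show "coeff Q (j-1) * exp (c * of_real t) ^ j = coeff Q (j-1) * exp (\<i> * complex_of_real ((\<epsilon> * real j) * t))" by simp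
    qed
    finally show ?thesis by simp
  qed
  have mem: "g \<in> expsums (Suc N) \<eta>"
    unfolding expsums_def
  proof (intro CollectI exI[of _ "\<lambda>j. coeff Q (j-1)"] exI[of _ "\<lambda>j. \<epsilon> * real j"] conjI ballI)
    fix j assume j: "j \<in> {1..Suc N}"
    show "0 < \<epsilon> * real j" using j \<epsilon>0 by auto
    have "\<epsilon> * real j \<le> \<epsilon> * (N+1)" using j \<epsilon>0 by (intro mult_left_mono) auto
    then show "\<epsilon> * real j < \<eta>" using \<epsilon>\<eta> by simp
  next
    fix j assume j: "j \<in> {1..<Suc N}"
    show "\<epsilon> * real j < \<epsilon> * real (Suc j)" using \<epsilon>0 by simp
  qed (simp add: g_def)
  have G0: "G 0 = 1" by (simp add: G_def T_def chebp_one)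
  have g0: "g 0 = 1" using gG[of 0] G0 by simp
  have gnz: "g \<noteq> (\<lambda>_. 0)" using g0 by auto
  have dG: "(G has_field_derivative (c - 2 * of_nat (N^2))) (at 0)"
  proof -
    have "(G has_field_derivative (c * exp (c * 0) * poly T (1 + 2/c - 2/c * exp (c * 0)) +
       exp (c * 0) * (poly (pderiv T) (1 + 2/c - 2/c * exp (c * 0)) * (- (2/c * (c * exp (c*0))))))) (at 0)"
      unfolding G_def
      by (auto intro!: derivative_eq_intros poly_DERIV simp: algebra_simps)
    moreover have "c * exp (c * 0) * poly T (1 + 2/c - 2/c * exp (c * 0)) +
       exp (c * 0) * (poly (pderiv T) (1 + 2/c - 2/c * exp (c * 0)) * (- (2/c * (c * exp (c*0))))) = c - 2 * of_nat (N^2)"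
      using c0 by (simp add: T_def chebp_one chebp_deriv_one)
    ultimately show ?thesis by simp
  qed
  have vd: "vector_derivative g (at 0) = c - 2 * of_nat (N^2)"
  proof (rule vector_derivative_at)
    have "((\<lambda>x. G (of_real x)) has_vector_derivative (c - 2 * of_nat (N^2))) (at 0)"
      by (rule has_vector_derivative_real_field) (use dG in simp)
    then show "(g has_vector_derivative c - 2 * of_nat (N^2)) (at 0)" (is ?thesis)
    proof -
      have "g = (\<lambda>x. G (of_real x))" using gG by auto
      then show ?thesis using \<open>((\<lambda>x. G (of_real x)) has_vector_derivative _) _\<close> by simp
    qed
  qed
  have deriv_bound: "cmod (vector_derivative g (at 0)) \<ge> 2 * real N ^ 2 - \<delta>"
  proof -
    have "cmod (2 * of_nat (N^2)) \<le> cmod (c - 2 * of_nat (N^2)) + cmod c"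
      using norm_triangle_ineq4[of c "c - 2 * of_nat (N^2)"] by (simp add: norm_minus_commute)
    moreover have "cmod c = \<epsilon>" using \<epsilon>0 by (simp add: c_def norm_mult)
    moreover have "cmod (2 * of_nat (N^2) :: complex) = 2 * real N ^ 2" by (simp add: norm_mult norm_power)
    ultimately show ?thesis using vd \<epsilon>\<delta> by simp
  qed
  have gbound: "cmod (g t) \<le> 1 + \<delta>" if t: "t \<in> {0..1}" for t
  proof -
    define x where "x = 1 - 2 * t"
    define z where "z = 1 + 2/c - 2/c * exp (c * of_real t)"
    have x1: "\<bar>x\<bar> \<le> 1" using t by (auto simp: x_def)
    have Tx: "cmod (poly T (of_real x)) \<le> 1" using chebp_cos[OF x1, of N] by (simp add: T_def)
    have ap: "cmod (exp (\<i> * complex_of_real (\<epsilon>*t)) - (1 + \<i> * complex_of_real (\<epsilon>*t))) \<le> \<bar>\<epsilon>*t\<bar>^2 / 2"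
      using iexp_approx1[of "\<epsilon>*t" 1] by (simp add: numeral_2_eq_2)
    have "z - of_real x = - 2 / c * (exp (c * of_real t) - (1 + c * of_real t))"
      using c0 by (simp add: z_def x_def field_simps)
    then have "cmod (z - of_real x) = cmod (- 2 / c) * cmod (exp (c * of_real t) - (1 + c * of_real t))"
      by (metis norm_mult)
    moreover have "cmod (- 2 / c) = 2 / \<epsilon>" using \<epsilon>0 by (simp add: c_def norm_divide norm_mult)
    moreover have "c * of_real t = \<i> * complex_of_real (\<epsilon>*t)" by (simp add: c_def)
    ultimately have "cmod (z - of_real x) = 2 / \<epsilon> * cmod (exp (\<i> * complex_of_real (\<epsilon>*t)) - (1 + \<i> * complex_of_real (\<epsilon>*t)))"
      by simp
    also have "\<dots> \<le> 2 / \<epsilon> * (\<bar>\<epsilon>*t\<bar>^2 / 2)"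
      using ap \<epsilon>0 by (intro mult_left_mono) auto
    also have "\<dots> = \<epsilon> * t^2" using \<epsilon>0 by (simp add: power2_eq_square)
    also have "\<dots> \<le> \<epsilon>" using t \<epsilon>0 by (auto intro!: mult_left_le simp: power_le_one)
    finally have zx: "cmod (z - of_real x) \<le> \<epsilon>" .
    have "cmod z \<le> cmod (of_real x) + cmod (z - of_real x)" using norm_triangle_ineq2[of z "of_real x"] by simp
    then have zb: "z \<in> cball 0 5" using zx x1 \<epsilon>\<delta> by simp
    have xb: "complex_of_real x \<in> cball 0 5" using x1 by simp
    have "dist (poly T z) (poly T (of_real x)) < \<delta>"
      using \<rho>b[OF zb xb] zx \<epsilon>\<delta> by (simp add: dist_norm)
    then have "cmod (poly T z) < 1 + \<delta>"
      using Tx norm_triangle_ineq2[of "poly T z" "poly T (of_real x)"] by (simp add: dist_norm)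
    moreover have "cmod (exp (c * of_real t)) = 1" by (simp add: c_def)
    moreover have "Re c = 0" by (simp add: c_def)
    ultimately show ?thesis using gG[of t] by (simp add: G_def z_def norm_mult)
  qed
  have bdd: "bdd_above ((\<lambda>t. cmod (g t)) ` {0..1})" using gbound by (intro bdd_aboveI2[where M="1+\<delta>"]) auto
  have s1: "supnorm01 g \<le> 1 + \<delta>" unfolding supnorm01_def
    by (rule cSUP_least) (auto intro: gbound)
  have s2: "supnorm01 g \<ge> 1" unfolding supnorm01_def
    using cSUP_upper[OF _ bdd, of 0] g0 by simp
  show ?thesis using mem gnz deriv_bound s1 s2 by auto
qed

lemma ratio_bound:
  fixes M e d s :: real
  assumes "e > 0" "M \<ge> 0" "d \<ge> 0" "2*M - e/(2*M+1) \<le> d" "0 < s" "s \<le> 1 + e/(2*M+1)"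
  shows "2*M - e \<le> d / s"
proof (cases "2*M - e \<le> 0")
  case True
  have "d/s \<ge> 0" using assms by simp
  then show ?thesis using True by linarith
next
  case False
  define \<delta> where "\<delta> = e/(2*M+1)"
  have de: "\<delta> * (2*M+1) = e" using assms by (simp add: \<delta>_def)
  have "(2*M - e) * s \<le> (2*M - e) * (1 + \<delta>)" using False assms by (intro mult_left_mono) (auto simp: \<delta>_def)
  also have "\<dots> = 2*M - \<delta> - e*\<delta>" using de by (simp add: algebra_simps)
  also have "\<dots> \<le> d" using assms(1,4) de \<delta>_def
    by (smt (verit) divide_nonneg_pos mult_nonneg_nonneg \<open>M \<ge> 0\<close>)
  finally show ?thesis using assms by (simp add: pos_le_divide_eq)
qed

theorem theorem9p2:
  fixes n :: nat and \<eta> :: real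
  assumes "n \<ge> 1" and "\<eta> > 0"
  shows "(SUP f\<in>{f\<in>expsums n \<eta>. f \<noteq> (\<lambda>_. 0)}.
            ereal (cmod (vector_derivative f (at 0)) / supnorm01 f))
         \<ge> ereal (2 * (real n - 1)^2)"
proof -
  obtain N where nN: "n = Suc N" using assms(1) by (cases n) auto
  have rn: "real n - 1 = real N" using nN by simp
  define M where "M = real N ^ 2"
  show ?thesis unfolding rn
  proof (rule ereal_le_epsilon2)
    fix e :: real assume e: "e > 0"
    have M0: "M \<ge> 0" by (simp add: M_def)
    have "e/(2*M+1) > 0" using e M0 by simp
    then obtain f where f: "f \<in> {f\<in>expsums n \<eta>. f \<noteq> (\<lambda>_. 0)}"
      and d: "cmod (vector_derivative f (at 0)) \<ge> 2 * real N ^ 2 - e/(2*M+1)"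
      and s: "supnorm01 f \<le> 1 + e/(2*M+1)" "supnorm01 f > 0"
      using approx[OF assms(2), of "e/(2*M+1)" N] nN by blast
    have r: "2*M - e \<le> cmod (vector_derivative f (at 0)) / supnorm01 f"
      by (rule ratio_bound[OF e M0 norm_ge_zero]) (use d s in \<open>auto simp: M_def\<close>)
    have "ereal (cmod (vector_derivative f (at 0)) / supnorm01 f) \<le> (SUP f\<in>{f\<in>expsums n \<eta>. f \<noteq> (\<lambda>_. 0)}.
            ereal (cmod (vector_derivative f (at 0)) / supnorm01 f))"
      by (rule SUP_upper[OF f])
    moreover have "ereal (2 * (real N)^2) \<le> ereal (cmod (vector_derivative f (at 0)) / supnorm01 f) + ereal e"
      using r by (simp add: M_def)
    ultimately show "ereal (2 * (real N)^2) \<le> (SUP f\<in>{f\<in>expsums n \<eta>. f \<noteq> (\<lambda>_. 0)}.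
            ereal (cmod (vector_derivative f (at 0)) / supnorm01 f)) + ereal e"
      by (meson add_right_mono order_trans)
  qed
qed

end
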